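(* Let $n\geq3$, $1>R>0$, $\rho\in(0,\frac R2)$, $n>\alpha>2$ and $f_0>0$ with $f_0>\frac{2n}{\alpha}(n-2)(n-\alpha)$, and let $F$ be as in the context. Define $h:=(n-\alpha)(3n-4)-f_0$, fix $\xi\in(4-\frac4n,4]$ and fix $\delta\in(0,1)$ with $$\delta>\max\left\{\frac{n-\alpha}{n},\ \frac{h+\sqrt{h^2+4f_0(n-\alpha)^2}}{2n(n-\alpha)}\right\}.$$ Then there exist positive constants $a,b,k_0,K_0$ depending only on $n,f_0,\alpha,\xi$ and $\delta$ such that for every $\gamma>\frac{4}{R-\rho}$ the function $\varphi:(0,\infty)\to\mathbb{R}$, $$\varphi(s):=\begin{cases}\frac{a}{\gamma^\delta}s^{-\delta}-b,& s<\frac{\xi}{\gamma},\\ e^{-\gamma s},& s\geq\frac{\xi}{\gamma},\end{cases}$$ is positive, belongs to $W^{2,\infty}_{loc}((0,\infty))$, and satisfies $$n^2s^{\frac{2n-2}{n}}\varphi_{ss}+4(n^2-n)s^{\frac{n-2}{n}}\varphi_s-nF\varphi_s-nF_s\varphi\geq k_0\gamma^{\frac2n}\varphi\quad\text{a.e. in }(0,\infty),$$ as well as $$\int_0^\infty\frac{\varphi^2(s)}{|\varphi_s(s)|}\,ds\leq\frac{K_0}{\gamma^2}.$$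
   Context: $F(s):=\int_0^{s^{1/n}}f(r)r^{n-1}\,dr$ for $s\geq0$, where $f:(0,\infty)\to[0,\infty)$ is smooth and monotonically decreasing with $f(r)=f_0r^{-\alpha}$ whenever $r^n\leq R-\rho$ and $f(r)=0$ whenever $r^n\geq R+\rho$. Consequently $F$ is smooth and nondecreasing, $F_s(s)=\frac1nf(s^{1/n})$ is nonincreasing, $F(s)=\frac{f_0}{n-\alpha}s^{\frac{n-\alpha}{n}}$ and $F_s(s)=\frac{f_0}{n}s^{-\frac{\alpha}{n}}$ for $0<s\leq R-\rho$, $F_s(s)=0$ for $s\geq R+\rho$, and $F\leq\frac{f_0}{n-\alpha}(R+\rho)^{\frac{n-\alpha}{n}}$. *)

theory Defs
  imports "HOL-Analysis.Analysis"
begin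

definition smooth_on :: "real set \<Rightarrow> (real \<Rightarrow> real) \<Rightarrow> bool" where
  "smooth_on U f \<longleftrightarrow> (\<forall>k. \<forall>x\<in>U. ((deriv ^^ k) f) differentiable (at x))"

definition Fpot :: "nat \<Rightarrow> (real \<Rightarrow> real) \<Rightarrow> real \<Rightarrow> real" where
  "Fpot n f s = (LBINT r=0..root n s. f r * r ^ (n - 1))"

text \<open>W^{2,infinity}_loc on an open interval U of the real line, via its standard
  one-dimensional characterisation (continuous representative): the function is
  differentiable on U and its derivative is Lipschitz on every compact subset of U.\<close>
definition W2inf_loc :: "real set \<Rightarrow> (real \<Rightarrow> real) \<Rightarrow> bool" where
  "W2inf_loc U \<phi> \<longleftrightarrow> (\<forall>s\<in>U. \<phi> differentiable (at s)) \<and>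
     (\<forall>K. compact K \<and> K \<subseteq> U \<longrightarrow> (\<exists>L. L-lipschitz_on K (deriv \<phi>)))"

end

theory Submission
  imports Defs
begin

lemma F_small:
  fixes n :: nat and \<alpha> f0 T u :: real and f :: "real \<Rightarrow> real"
  assumes n: "n \<ge> 1" and al: "\<alpha> < real n"
    and cont: "\<And>x. 0 < x \<Longrightarrow> isCont f x"
    and nonneg: "\<And>r. r > 0 \<Longrightarrow> f r \<ge> 0"
    and expl: "\<And>r. r > 0 \<Longrightarrow> r ^ n \<le> T \<Longrightarrow> f r = f0 * r powr (-\<alpha>)"
    and u: "0 < u" "u ^ n \<le> T"
  shows "set_integrable lborel (einterval 0 u) (\<lambda>r. f r * r ^ (n - 1))"
    "(LBINT r=0..u. f r * r ^ (n - 1)) = f0 / (real n - \<alpha>) * u powr (real n - \<alpha>)"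
proof -
  let ?P = "\<lambda>r. f0 / (real n - \<alpha>) * r powr (real n - \<alpha>)"
  have D: "DERIV ?P x :> f x * x ^ (n - 1)" if "0 < x" "x < u" for x
  proof -
    have "x ^ n \<le> u ^ n" using that by (intro power_mono) auto
    hence fx: "f x = f0 * x powr (-\<alpha>)" using expl that u by auto
    have "DERIV ?P x :> f0 / (real n - \<alpha>) * ((real n - \<alpha>) * x powr (real n - \<alpha> - 1))"
      using that by (auto intro!: derivative_eq_intros)
    moreover have "f0 / (real n - \<alpha>) * ((real n - \<alpha>) * x powr (real n - \<alpha> - 1)) = f x * x ^ (n - 1)"
    proof -
      have "real n - 1 = real (n - 1)" using n by simp
      moreover have "x powr (real (n - 1)) = x ^ (n - 1)" using that by (intro powr_realpow) simp
      ultimately have "x ^ (n - 1) = x powr (real n - 1)" by metis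
      hence "f x * x ^ (n - 1) = f0 * (x powr (-\<alpha>) * x powr (real n - 1))" by (simp add: fx)
      also have "\<dots> = f0 * x powr (real n - \<alpha> - 1)" by (subst powr_add[symmetric]) (simp add: algebra_simps)
      finally show ?thesis using al by simp
    qed
    ultimately show ?thesis by simp
  qed
  have lim0: "((?P \<circ> real_of_ereal) \<longlongrightarrow> 0) (at_right (ereal 0))"
    unfolding ereal_tendsto_simps
    using al by (auto intro!: tendsto_eq_intros tendsto_zero_powrI eventually_at_rightI[of 0 1])
  have limu: "((?P \<circ> real_of_ereal) \<longlongrightarrow> ?P u) (at_left (ereal u))"
    unfolding ereal_tendsto_simps
    using u al by (auto intro!: tendsto_eq_intros)
  note FTC0 = interval_integral_FTC_nonneg[where F="?P" and f="\<lambda>r. f r * r^(n-1)" and a = "ereal 0" and b="ereal u", OF _ _ _ _ lim0 limu]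
  have h1: "ereal 0 < ereal u" using u by simp
  have h2: "\<And>x. ereal 0 < ereal x \<Longrightarrow> ereal x < ereal u \<Longrightarrow> DERIV ?P x :> f x * x ^ (n - 1)"
    using D by simp
  have h3: "\<And>x. ereal 0 < ereal x \<Longrightarrow> ereal x < ereal u \<Longrightarrow> isCont (\<lambda>r. f r * r^(n-1)) x"
    by (intro continuous_intros cont) simp
  have h4: "AE x in lborel. ereal 0 < ereal x \<longrightarrow> ereal x < ereal u \<longrightarrow> 0 \<le> f x * x^(n-1)"
    by (rule AE_I2) (auto intro!: mult_nonneg_nonneg nonneg)
  note FTC = FTC0[OF h1 h2 h3 h4]
  show "set_integrable lborel (einterval 0 u) (\<lambda>r. f r * r ^ (n - 1))" using FTC(1) by (simp only: zero_ereal_def)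
  show "(LBINT r=0..u. f r * r ^ (n - 1)) = ?P u" using FTC(2) by (simp only: zero_ereal_def diff_zero)
qed

lemma F_int:
  fixes n :: nat and \<alpha> f0 T v :: real and f :: "real \<Rightarrow> real"
  assumes n: "n \<ge> 1" and al: "\<alpha> < real n"
    and cont: "\<And>x. 0 < x \<Longrightarrow> isCont f x"
    and nonneg: "\<And>r. r > 0 \<Longrightarrow> f r \<ge> 0"
    and expl: "\<And>r. r > 0 \<Longrightarrow> r ^ n \<le> T \<Longrightarrow> f r = f0 * r powr (-\<alpha>)"
    and T: "T > 0" and v: "0 < v"
  shows "set_integrable lborel (einterval 0 v) (\<lambda>r. f r * r ^ (n - 1))"
proof -
  define w where "w = min v (root n T)"
  have w: "0 < w" "w \<le> v" using v T n by (auto simp: w_def)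
  have "w ^ n \<le> root n T ^ n" using w by (intro power_mono) (auto simp: w_def)
  also have "\<dots> = T" using T n by simp
  finally have wT: "w ^ n \<le> T" .
  have I1: "set_integrable lborel (einterval 0 w) (\<lambda>r. f r * r ^ (n - 1))"
    by (rule F_small(1)[OF n al cont nonneg expl w(1) wT])
  have "continuous_on {w..v} (\<lambda>r. f r * r ^ (n - 1))"
    using w by (intro continuous_at_imp_continuous_on ballI continuous_intros cont) auto
  hence I2: "set_integrable lborel {w..v} (\<lambda>r. f r * r ^ (n - 1))"
    by (rule borel_integrable_atLeastAtMost')
  have I3: "set_integrable lborel (einterval 0 w \<union> {w..v}) (\<lambda>r. f r * r ^ (n - 1))"
    by (rule set_integrable_Un[OF I1 I2]) auto
  show ?thesis
    by (rule set_integrable_subset[OF I3]) (auto simp: einterval_iff)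
qed

lemma F_deriv:
  fixes n :: nat and \<alpha> f0 T u :: real and f :: "real \<Rightarrow> real"
  assumes n: "n \<ge> 1" and al: "\<alpha> < real n"
    and cont: "\<And>x. 0 < x \<Longrightarrow> isCont f x"
    and nonneg: "\<And>r. r > 0 \<Longrightarrow> f r \<ge> 0"
    and expl: "\<And>r. r > 0 \<Longrightarrow> r ^ n \<le> T \<Longrightarrow> f r = f0 * r powr (-\<alpha>)"
    and T: "T > 0" and u: "0 < u"
  shows "((\<lambda>v. LBINT r=0..v. f r * r ^ (n - 1)) has_real_derivative f u * u ^ (n - 1)) (at u)"
proof -
  let ?g = "\<lambda>r. f r * r ^ (n - 1)"
  define u1 where "u1 = u / 2"
  define b where "b = u + 1"
  have u1: "0 < u1" "u1 < u" "u < b" using u by (auto simp: u1_def b_def)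
  have cg: "continuous_on {u1..b} ?g"
    using u1 by (intro continuous_at_imp_continuous_on ballI continuous_intros cont) auto
  have "((\<lambda>v. LBINT r=u1..v. ?g r) has_vector_derivative ?g u) (at u within {u1..b})"
    by (rule interval_integral_FTC2[OF _ _ cg]) (use u1 in auto)
  hence "((\<lambda>v. LBINT r=u1..v. ?g r) has_vector_derivative ?g u) (at u within {u1<..<b})"
    by (rule has_vector_derivative_within_subset) auto
  hence D0: "((\<lambda>v. LBINT r=u1..v. ?g r) has_vector_derivative ?g u) (at u)"
    using u1 by (subst (asm) at_within_open) auto
  have D: "((\<lambda>v. (LBINT r=0..u1. ?g r) + (LBINT r=u1..v. ?g r)) has_real_derivative ?g u) (at u)"
    using DERIV_add[OF DERIV_const[of "LBINT r=0..u1. ?g r"] D0[unfolded has_real_derivative_iff_has_vector_derivative[symmetric]]] by simp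
  show ?thesis
  proof (rule has_field_derivative_transform_within_open[OF D, of "{u1<..<b}"])
    fix v assume v: "v \<in> {u1<..<b}"
    have "set_integrable lborel (einterval 0 v) ?g"
      by (rule F_int[OF n al cont nonneg expl T]) (use v u1 in auto)
    hence "interval_lebesgue_integrable lborel 0 (ereal v) ?g"
      unfolding interval_lebesgue_integrable_def using v u1 by simp
    moreover have "min 0 (min (ereal u1) (ereal v)) = 0"
      "max 0 (max (ereal u1) (ereal v)) = ereal v" using v u1 by (auto simp: min_def max_def)
    ultimately have "interval_lebesgue_integrable lborel (min 0 (min (ereal u1) (ereal v))) (max 0 (max (ereal u1) (ereal v))) ?g"
      by metis
    thus "(LBINT r=0..u1. ?g r) + (LBINT r=u1..v. ?g r) = (LBINT r=0..v. ?g r)"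
      by (rule interval_integral_sum)
  qed (use u1 in auto)
qed

lemma DERIV_glue:
  fixes p q :: "real \<Rightarrow> real"
  assumes p: "DERIV p c :> D" and q: "DERIV q c :> D" and pq: "p c = q c"
  shows "DERIV (\<lambda>x. if x < c then p x else q x) c :> D"
proof -
  let ?h = "\<lambda>x. if x < c then p x else q x"
  have p': "((\<lambda>y. (p y - p c) / (y - c)) \<longlongrightarrow> D) (at c)" using p by (simp add: has_field_derivative_iff)
  have q': "((\<lambda>y. (q y - q c) / (y - c)) \<longlongrightarrow> D) (at c)" using q by (simp add: has_field_derivative_iff)
  have "((\<lambda>y. (?h y - ?h c) / (y - c)) \<longlongrightarrow> D) (at c)"
  proof (rule filterlim_split_at)
    have "((\<lambda>y. (p y - p c) / (y - c)) \<longlongrightarrow> D) (at_left c)"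
      by (rule tendsto_mono[OF at_le p']) simp
    thus "((\<lambda>y. (?h y - ?h c) / (y - c)) \<longlongrightarrow> D) (at_left c)"
      by (rule Lim_transform_eventually) (auto simp: eventually_at_filter pq)
    have "((\<lambda>y. (q y - q c) / (y - c)) \<longlongrightarrow> D) (at_right c)"
      by (rule tendsto_mono[OF at_le q']) simp
    thus "((\<lambda>y. (?h y - ?h c) / (y - c)) \<longlongrightarrow> D) (at_right c)"
      by (rule Lim_transform_eventually) (auto simp: eventually_at_filter)
  qed
  thus ?thesis by (simp add: has_field_derivative_iff)
qed

lemma lipschitz_from_deriv:
  fixes f f' :: "real \<Rightarrow> real"
  assumes D: "\<And>x. m \<le> x \<Longrightarrow> x \<le> M \<Longrightarrow> DERIV f x :> f' x"
    and B: "\<And>x. m \<le> x \<Longrightarrow> x \<le> M \<Longrightarrow> \<bar>f' x\<bar> \<le> L" and L: "0 \<le> L"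
  shows "L-lipschitz_on {m..M} f"
proof (rule lipschitz_on_leI)
  fix x y assume xy: "x \<in> {m..M}" "y \<in> {m..M}" "x \<le> y"
  show "dist (f x) (f y) \<le> L * dist x y"
  proof (cases "x = y")
    case False
    hence "x < y" using xy by simp
    then obtain z where z: "x < z" "z < y" "f y - f x = (y - x) * f' z"
      using MVT2[of x y f f'] D xy by force
    have "\<bar>f' z\<bar> \<le> L" using B z xy by auto
    hence "\<bar>f y - f x\<bar> \<le> (y - x) * L" using z \<open>x < y\<close> by (simp add: abs_mult mult_left_mono)
    thus ?thesis using \<open>x < y\<close> by (simp add: dist_real_def abs_minus_commute mult.commute abs_of_neg)
  qed (simp add: L)
qed (rule L)

lemma Fpot_props:
  fixes n :: nat and \<alpha> f0 T :: real and f :: "real \<Rightarrow> real"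
  assumes n: "n \<ge> 1" and al: "\<alpha> < real n"
    and cont: "\<And>x. 0 < x \<Longrightarrow> isCont f x"
    and nonneg: "\<And>r. r > 0 \<Longrightarrow> f r \<ge> 0"
    and expl: "\<And>r. r > 0 \<Longrightarrow> r ^ n \<le> T \<Longrightarrow> f r = f0 * r powr (-\<alpha>)"
    and T: "T > 0"
  shows "\<And>s. 0 < s \<Longrightarrow> DERIV (Fpot n f) s :> f (root n s) / real n"
    and "\<And>s. 0 < s \<Longrightarrow> s \<le> T \<Longrightarrow> Fpot n f s = f0 / (real n - \<alpha>) * s powr ((real n - \<alpha>) / real n)"
    and "\<And>s1 s2. 0 < s1 \<Longrightarrow> s1 \<le> s2 \<Longrightarrow> Fpot n f s1 \<le> Fpot n f s2"
    and "\<And>s. 0 < s \<Longrightarrow> s \<le> T \<Longrightarrow> f (root n s) / real n = f0 / real n * s powr (-\<alpha> / real n)"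
proof -
  let ?G = "\<lambda>v. LBINT r=0..v. f r * r ^ (n - 1)"
  have FG: "Fpot n f = (\<lambda>s. ?G (root n s))" by (simp add: fun_eq_iff Fpot_def)
  have n0: "0 < n" using n by simp
  show D: "DERIV (Fpot n f) s :> f (root n s) / real n" if s: "0 < s" for s
  proof -
    have u: "0 < root n s" using s n0 by simp
    have "DERIV (\<lambda>s. ?G (root n s)) s :> f (root n s) * root n s ^ (n - 1) * inverse (real n * root n s ^ (n - Suc 0))"
      by (rule DERIV_chain2[OF F_deriv[OF n al cont nonneg expl T u] DERIV_real_root[OF n0 s]])
    moreover have "f (root n s) * root n s ^ (n - 1) * inverse (real n * root n s ^ (n - Suc 0)) = f (root n s) / real n"
      using u n0 by (simp add: field_simps)
    ultimately show ?thesis using FG by simp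
  qed
  show "Fpot n f s = f0 / (real n - \<alpha>) * s powr ((real n - \<alpha>) / real n)" if s: "0 < s" "s \<le> T" for s
  proof -
    have u: "0 < root n s" using s n0 by simp
    have "root n s ^ n = s" using s n0 by simp
    hence un: "root n s ^ n \<le> T" using s by simp
    have "Fpot n f s = f0 / (real n - \<alpha>) * root n s powr (real n - \<alpha>)"
      using F_small(2)[OF n al cont nonneg expl u un] by (simp add: Fpot_def)
    also have "root n s powr (real n - \<alpha>) = s powr ((real n - \<alpha>) / real n)"
      using s n0 by (simp add: root_powr_inverse powr_powr)
    finally show ?thesis .
  qed
  show "Fpot n f s1 \<le> Fpot n f s2" if s: "0 < s1" "s1 \<le> s2" for s1 s2
    by (rule DERIV_nonneg_imp_nondecreasing[OF s(2)])
       (use s in \<open>auto intro!: exI D divide_nonneg_nonneg nonneg simp: n0\<close>)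
  show "f (root n s) / real n = f0 / real n * s powr (-\<alpha> / real n)" if s: "0 < s" "s \<le> T" for s
  proof -
    have u: "0 < root n s" using s n0 by simp
    have "root n s ^ n = s" using s n0 by simp
    hence un: "root n s ^ n \<le> T" using s by simp
    have "f (root n s) = f0 * root n s powr (-\<alpha>)" using expl[OF u un] .
    also have "root n s powr (-\<alpha>) = s powr (-\<alpha> / real n)"
      using s n0 by (simp add: root_powr_inverse powr_powr)
    finally show ?thesis by simp
  qed
qed

lemma powr_prod_exp:
  fixes s p q r :: real
  assumes "p + q = r"
  shows "s powr p * s powr q = s powr r"
  using assms by (simp add: powr_add[symmetric])

lemma ineq1:
  fixes n :: nat and \<alpha> f0 \<delta> \<xi> \<gamma> A b s k0 \<phi>ss d Fv Fsv phv :: real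
  assumes n: "n \<ge> 3" and al: "2 < \<alpha>" "\<alpha> < real n" and f0: "f0 > 0"
    and dl: "0 < \<delta>" "\<delta> < 1"
    and cc: "f0 * (real n * \<delta> / (real n - \<alpha>) - 1) - real n * \<delta> * (3 * real n - 4 - real n * \<delta>) > 0"
    and c2: "f0 * (real n * \<delta> / (real n - \<alpha>) - 1) > 0"
    and s: "0 < s" "s < \<xi> / \<gamma>" and c1: "\<xi> / \<gamma> \<le> 1" and xi: "\<xi> > 0" and ga: "\<gamma> > 0"
    and A: "A > 0" and b: "b > 0"
    and k0: "k0 \<le> (f0 * (real n * \<delta> / (real n - \<alpha>) - 1) - real n * \<delta> * (3 * real n - 4 - real n * \<delta>)) * \<xi> powr (-2 / real n)"
    and ph: "phv = A * s powr (-\<delta>) - b" "phv > 0"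
    and d: "d = - \<delta> * A * s powr (-\<delta> - 1)"
    and pss: "\<phi>ss = \<delta> * (\<delta> + 1) * A * s powr (-\<delta> - 2)"
    and Fv: "Fv = f0 / (real n - \<alpha>) * s powr ((real n - \<alpha>) / real n)"
    and Fsv: "Fsv = f0 / real n * s powr (-\<alpha> / real n)"
  shows "real n ^ 2 * s powr ((2 * real n - 2) / real n) * \<phi>ss
                + 4 * (real n ^ 2 - real n) * s powr ((real n - 2) / real n) * d
                - real n * Fv * d - real n * Fsv * phv
                \<ge> k0 * \<gamma> powr (2 / real n) * phv"
proof -
  define Z where "Z = s powr (-\<delta>)"
  define X where "X = s powr (-2 / real n)"
  define Y where "Y = s powr (-\<alpha> / real n)"
  define C1 where "C1 = real n * \<delta> * (3 * real n - 4 - real n * \<delta>)"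
  define C2 where "C2 = f0 * (real n * \<delta> / (real n - \<alpha>) - 1)"
  have n0: "real n > 0" using n by simp
  have e1: "s powr ((2 * real n - 2) / real n) * s powr (-\<delta> - 2) = Z * X"
    unfolding Z_def X_def by (rule trans[OF powr_prod_exp[OF refl]], rule powr_prod_exp[symmetric]) (use n0 in \<open>simp add: field_simps\<close>)
  have e2: "s powr ((real n - 2) / real n) * s powr (-\<delta> - 1) = Z * X"
    unfolding Z_def X_def by (rule trans[OF powr_prod_exp[OF refl]], rule powr_prod_exp[symmetric]) (use n0 in \<open>simp add: field_simps\<close>)
  have e3: "s powr ((real n - \<alpha>) / real n) * s powr (-\<delta> - 1) = Z * Y"
    unfolding Z_def Y_def by (rule trans[OF powr_prod_exp[OF refl]], rule powr_prod_exp[symmetric]) (use n0 in \<open>simp add: field_simps\<close>)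
  have LHS: "real n ^ 2 * s powr ((2 * real n - 2) / real n) * \<phi>ss
                + 4 * (real n ^ 2 - real n) * s powr ((real n - 2) / real n) * d
                - real n * Fv * d - real n * Fsv * phv
           = A * Z * X * (- C1) + A * Z * Y * C2 + f0 * b * Y"
  proof -
    have L1: "real n ^ 2 * s powr ((2 * real n - 2) / real n) * \<phi>ss = real n ^ 2 * \<delta> * (\<delta> + 1) * A * (Z * X)"
      by (simp only: pss e1[symmetric]) (simp add: algebra_simps)
    have L2: "4 * (real n ^ 2 - real n) * s powr ((real n - 2) / real n) * d = - 4 * (real n ^ 2 - real n) * \<delta> * A * (Z * X)"
      by (simp only: d e2[symmetric]) (simp add: algebra_simps)
    have L3: "real n * Fv * d = - real n * f0 / (real n - \<alpha>) * \<delta> * A * (Z * Y)"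
      by (simp only: d Fv e3[symmetric]) (simp add: algebra_simps)
    have L4: "real n * Fsv * phv = f0 * Y * (A * Z - b)"
      using n0 by (simp add: Fsv ph(1) Y_def Z_def)
    have "real n ^ 2 * s powr ((2 * real n - 2) / real n) * \<phi>ss
                + 4 * (real n ^ 2 - real n) * s powr ((real n - 2) / real n) * d
                - real n * Fv * d - real n * Fsv * phv
       = real n ^ 2 * \<delta> * (\<delta> + 1) * A * (Z * X) + (- 4 * (real n ^ 2 - real n) * \<delta> * A * (Z * X))
         - (- real n * f0 / (real n - \<alpha>) * \<delta> * A * (Z * Y)) - f0 * Y * (A * Z - b)"
      by (simp only: L1 L2 L3 L4)
    also have "\<dots> = A * Z * X * (- C1) + A * Z * Y * C2 + f0 * b * Y"
    proof -
      have nz: "real n - \<alpha> \<noteq> 0" using al by simp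
      show ?thesis unfolding C1_def C2_def using nz
        by (simp add: field_simps power2_eq_square)
    qed
    finally show ?thesis .
  qed
  have pos: "Z > 0" "X > 0" "Y > 0" using s by (auto simp: Z_def X_def Y_def)
  have YX: "X \<le> Y" unfolding X_def Y_def
    using s c1 al n0 by (intro powr_mono') (auto simp: divide_right_mono)
  have Xlow: "\<xi> powr (-2 / real n) * \<gamma> powr (2 / real n) \<le> X"
  proof -
    have "(\<xi> / \<gamma>) powr (-2 / real n) \<le> X" unfolding X_def
      using s n0 by (intro powr_mono2') auto
    moreover have "(\<xi> / \<gamma>) powr (-2 / real n) = \<xi> powr (-2 / real n) * \<gamma> powr (2 / real n)"
    proof -
      have g: "\<gamma> powr (-2 / real n) = inverse (\<gamma> powr (2/real n))" using powr_minus[of \<gamma> "2/real n"] by simp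
      have "(\<xi> / \<gamma>) powr (-2 / real n) = \<xi> powr (-2 / real n) / \<gamma> powr (-2 / real n)" by (rule powr_divide)
      also have "\<dots> = \<xi> powr (-2 / real n) * \<gamma> powr (2 / real n)" unfolding g using ga by (simp add: divide_inverse)
      finally show ?thesis .
    qed
    ultimately show ?thesis by simp
  qed
  have "A * Z * Y * C2 \<ge> A * Z * X * C2"
    using YX pos A c2 unfolding C2_def by (intro mult_right_mono mult_left_mono) auto
  hence "A * Z * X * (- C1) + A * Z * Y * C2 + f0 * b * Y \<ge> A * Z * X * (C2 - C1)"
    using f0 b pos by (simp add: algebra_simps) (smt (verit) mult_pos_pos)
  moreover have "A * Z * X * (C2 - C1) \<ge> phv * X * (C2 - C1)"
  proof -
    have "phv \<le> A * Z" using ph b by (simp add: Z_def)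
    thus ?thesis using pos cc unfolding C1_def C2_def
      by (intro mult_right_mono) auto
  qed
  moreover have "phv * X * (C2 - C1) \<ge> phv * (\<xi> powr (-2 / real n) * \<gamma> powr (2 / real n)) * (C2 - C1)"
    using Xlow ph(2) cc unfolding C1_def C2_def by (intro mult_right_mono mult_left_mono) auto
  moreover have "phv * (\<xi> powr (-2 / real n) * \<gamma> powr (2 / real n)) * (C2 - C1) \<ge> k0 * \<gamma> powr (2 / real n) * phv"
  proof -
    have "k0 \<le> (C2 - C1) * \<xi> powr (-2 / real n)" using k0 unfolding C1_def C2_def .
    hence "k0 * (\<gamma> powr (2 / real n) * phv) \<le> (C2 - C1) * \<xi> powr (-2 / real n) * (\<gamma> powr (2 / real n) * phv)"
      using ph(2) by (intro mult_right_mono) auto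
    thus ?thesis by (simp add: algebra_simps)
  qed
  ultimately show ?thesis unfolding LHS by linarith
qed

lemma ineq2:
  fixes n :: nat and \<xi> \<gamma> s E Fv Fsv k0 \<phi>ss d phv :: real
  assumes n: "n \<ge> 3" and xi: "4 - 4 / real n < \<xi>" "0 < \<xi>" and ga: "\<gamma> > 0"
    and s: "\<xi> / \<gamma> < s" and E: "E > 0" and FF: "Fsv \<le> \<gamma> * Fv"
    and k0: "k0 \<le> real n * \<xi> powr ((real n - 2) / real n) * (real n * \<xi> - 4 * (real n - 1))"
    and pss: "\<phi>ss = \<gamma>\<^sup>2 * E" and d: "d = - \<gamma> * E" and ph: "phv = E"
  shows "real n ^ 2 * s powr ((2 * real n - 2) / real n) * \<phi>ss
                + 4 * (real n ^ 2 - real n) * s powr ((real n - 2) / real n) * d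
                - real n * Fv * d - real n * Fsv * phv
                \<ge> k0 * \<gamma> powr (2 / real n) * phv"
proof -
  have n0: "real n > 0" using n by simp
  have s0: "s > 0" using s xi ga by (smt (verit) divide_pos_pos)
  define P where "P = s powr ((real n - 2) / real n)"
  define q where "q = (real n - 2) / real n"
  have q0: "q \<ge> 0" using n by (simp add: q_def)
  have Ps: "s powr ((2 * real n - 2) / real n) = P * s"
  proof -
    have "s powr ((real n - 2) / real n) * s powr 1 = s powr ((2 * real n - 2) / real n)"
      by (rule powr_prod_exp) (use n0 in \<open>simp add: field_simps\<close>)
    thus ?thesis using s0 by (simp add: P_def)
  qed
  have sg: "\<xi> \<le> s * \<gamma>" using s ga by (simp add: field_simps)
  have Pg: "P * \<gamma> = (s * \<gamma>) powr q * \<gamma> powr (2 / real n)"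
  proof -
    have "\<gamma> powr q * \<gamma> powr (2 / real n) = \<gamma> powr 1"
      by (rule powr_prod_exp) (use n0 in \<open>simp add: q_def field_simps\<close>)
    hence "\<gamma> = \<gamma> powr q * \<gamma> powr (2 / real n)" using ga by simp
    hence "P * \<gamma> = P * (\<gamma> powr q * \<gamma> powr (2 / real n))" by simp
    also have "\<dots> = (s * \<gamma>) powr q * \<gamma> powr (2 / real n)"
      by (simp add: P_def q_def powr_mult)
    finally show ?thesis .
  qed
  have xq: "\<xi> powr q \<le> (s * \<gamma>) powr q" using sg q0 xi by (intro powr_mono2) auto
  have G: "real n * \<xi> - 4 * (real n - 1) > 0" using xi n0 by (simp add: field_simps)
  have G2: "real n * \<gamma> * s - 4 * (real n - 1) \<ge> real n * \<xi> - 4 * (real n - 1)"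
    using sg n0 by (simp add: algebra_simps)
  have LHS: "real n ^ 2 * s powr ((2 * real n - 2) / real n) * \<phi>ss
                + 4 * (real n ^ 2 - real n) * s powr ((real n - 2) / real n) * d
                - real n * Fv * d - real n * Fsv * phv
        = E * (real n * (P * \<gamma>) * (real n * \<gamma> * s - 4 * (real n - 1)) + real n * (\<gamma> * Fv - Fsv))"
    unfolding Ps pss d ph P_def[symmetric] by (simp add: algebra_simps power2_eq_square)
  have "E * (real n * (P * \<gamma>) * (real n * \<gamma> * s - 4 * (real n - 1)) + real n * (\<gamma> * Fv - Fsv))
      \<ge> E * (real n * (P * \<gamma>) * (real n * \<xi> - 4 * (real n - 1)))"
  proof -
    have "P * \<gamma> > 0" using s0 ga by (simp add: P_def)
    hence "real n * (P * \<gamma>) * (real n * \<gamma> * s - 4 * (real n - 1)) \<ge> real n * (P * \<gamma>) * (real n * \<xi> - 4 * (real n - 1))"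
      using G2 n0 by (intro mult_left_mono) auto
    moreover have "real n * (\<gamma> * Fv - Fsv) \<ge> 0" using FF n0 by simp
    ultimately show ?thesis using E by (intro mult_left_mono) auto
  qed
  moreover have "E * (real n * (P * \<gamma>) * (real n * \<xi> - 4 * (real n - 1)))
      \<ge> E * (real n * (\<xi> powr q * \<gamma> powr (2 / real n)) * (real n * \<xi> - 4 * (real n - 1)))"
    unfolding Pg using xq E G n0 by (intro mult_left_mono mult_right_mono) auto
  moreover have "E * (real n * (\<xi> powr q * \<gamma> powr (2 / real n)) * (real n * \<xi> - 4 * (real n - 1)))
      \<ge> k0 * \<gamma> powr (2 / real n) * E"
  proof -
    have "k0 * (\<gamma> powr (2 / real n) * E) \<le> (real n * \<xi> powr q * (real n * \<xi> - 4 * (real n - 1))) * (\<gamma> powr (2 / real n) * E)"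
      using k0 E unfolding q_def by (intro mult_right_mono) auto
    thus ?thesis by (simp add: algebra_simps)
  qed
  ultimately have "E * (real n * (P * \<gamma>) * (real n * \<gamma> * s - 4 * (real n - 1)) + real n * (\<gamma> * Fv - Fsv)) \<ge> k0 * \<gamma> powr (2 / real n) * E"
    by linarith
  thus ?thesis unfolding LHS unfolding ph .
qed

lemma phi_main:
  fixes n :: nat and \<alpha> f0 \<xi> \<delta> \<gamma> a b k0 K0 :: real and F Fs :: "real \<Rightarrow> real"
  assumes n: "n \<ge> 3" and al: "2 < \<alpha>" "\<alpha> < real n" and f0: "f0 > 0"
    and xi: "4 - 4 / real n < \<xi>" "\<xi> \<le> 4" and dl: "0 < \<delta>" "\<delta> < 1"
    and cc: "f0 * (real n * \<delta> / (real n - \<alpha>) - 1) - real n * \<delta> * (3 * real n - 4 - real n * \<delta>) > 0"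
    and c2: "f0 * (real n * \<delta> / (real n - \<alpha>) - 1) > 0"
    and ga: "\<gamma> > 4"
    and a_def: "a = \<xi> powr (\<delta> + 1) * exp (-\<xi>) / \<delta>" and b_def: "b = exp (-\<xi>) * (\<xi> / \<delta> - 1)"
    and k0a: "k0 \<le> (f0 * (real n * \<delta> / (real n - \<alpha>) - 1) - real n * \<delta> * (3 * real n - 4 - real n * \<delta>)) * \<xi> powr (-2 / real n)"
    and k0b: "k0 \<le> real n * \<xi> powr ((real n - 2) / real n) * (real n * \<xi> - 4 * (real n - 1))"
    and K0: "K0 = \<xi> ^ 3 * exp (-\<xi>) / \<delta>\<^sup>2 + exp (-\<xi>)"
    and FD: "\<And>s. 0 < s \<Longrightarrow> DERIV F s :> Fs s"
    and Fe: "\<And>s. 0 < s \<Longrightarrow> s \<le> \<xi> / \<gamma> \<Longrightarrow> F s = f0 / (real n - \<alpha>) * s powr ((real n - \<alpha>) / real n)"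
    and Fse: "\<And>s. 0 < s \<Longrightarrow> s \<le> \<xi> / \<gamma> \<Longrightarrow> Fs s = f0 / real n * s powr (-\<alpha> / real n)"
    and Fm: "\<And>s. \<xi> / \<gamma> \<le> s \<Longrightarrow> F (\<xi> / \<gamma>) \<le> F s"
    and Fsm: "\<And>s. \<xi> / \<gamma> \<le> s \<Longrightarrow> Fs s \<le> Fs (\<xi> / \<gamma>)"
  shows "let \<phi> = (\<lambda>s::real. if s < \<xi> / \<gamma> then a / \<gamma> powr \<delta> * s powr (-\<delta>) - b
                           else exp (- \<gamma> * s))
       in (\<forall>s>0. \<phi> s > 0) \<and>
          W2inf_loc {0<..} \<phi> \<and>
          (AE s in lebesgue. s > 0 \<longrightarrow>
             (\<exists>\<phi>\<^sub>s\<^sub>s. (deriv \<phi> has_real_derivative \<phi>\<^sub>s\<^sub>s) (at s) \<and>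
                real n ^ 2 * s powr ((2 * real n - 2) / real n) * \<phi>\<^sub>s\<^sub>s
                + 4 * (real n ^ 2 - real n) * s powr ((real n - 2) / real n) * deriv \<phi> s
                - real n * F s * deriv \<phi> s - real n * deriv F s * \<phi> s
                \<ge> k0 * \<gamma> powr (2 / real n) * \<phi> s)) \<and>
          (\<integral>\<^sup>+ s \<in> {0<..}. ennreal ((\<phi> s)\<^sup>2 / \<bar>deriv \<phi> s\<bar>) \<partial>lborel)
             \<le> ennreal (K0 / \<gamma>\<^sup>2)"
proof -
  define \<phi> where "\<phi> = (\<lambda>s::real. if s < \<xi> / \<gamma> then a / \<gamma> powr \<delta> * s powr (-\<delta>) - b
                           else exp (- \<gamma> * s))"
  define c where "c = \<xi> / \<gamma>"
  define A where "A = a / \<gamma> powr \<delta>"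
  define p1 where "p1 = (\<lambda>x::real. a / \<gamma> powr \<delta> * x powr (-\<delta>) - b)"
  define p2 where "p2 = (\<lambda>x::real. exp (- \<gamma> * x))"
  define q1 where "q1 = (\<lambda>x::real. - \<delta> * A * x powr (-\<delta> - 1))"
  define q2 where "q2 = (\<lambda>x::real. - \<gamma> * exp (- \<gamma> * x))"
  define r1 where "r1 = (\<lambda>x::real. \<delta> * (\<delta> + 1) * A * x powr (-\<delta> - 2))"
  define r2 where "r2 = (\<lambda>x::real. \<gamma>\<^sup>2 * exp (- \<gamma> * x))"
  define \<phi>' where "\<phi>' = (\<lambda>x. if x < c then q1 x else q2 x)"
  have phi_eq: "\<phi> = (\<lambda>x. if x < c then p1 x else p2 x)"
    unfolding \<phi>_def c_def p1_def p2_def by (rule refl)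
  have n0: "real n > 0" using n by simp
  have xi0: "\<xi> > 1"
  proof -
    have n3: "real n \<ge> 3" using n by simp
    have "4 / real n \<le> 4 / 3" using n3 by (simp add: field_simps)
    thus ?thesis using xi by linarith
  qed
  have ga0: "\<gamma> > 0" using ga by simp
  have c0: "c > 0" "c < 1" using xi0 ga xi by (auto simp: c_def field_simps)
  have a0: "a > 0" using xi0 dl by (simp add: a_def)
  have b0: "b > 0" using xi0 dl by (simp add: b_def field_simps)
  have A0: "A > 0" using a0 ga0 by (simp add: A_def)
  have AC: "A * c powr (-\<delta>) = \<xi> * exp (-\<xi>) / \<delta>"
  proof -
    have "c powr (-\<delta>) = \<xi> powr (-\<delta>) / \<gamma> powr (-\<delta>)" unfolding c_def by (rule powr_divide)
    also have "\<gamma> powr (-\<delta>) = inverse (\<gamma> powr \<delta>)" by (rule powr_minus)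
    finally have "A * c powr (-\<delta>) = a * \<xi> powr (-\<delta>)" using ga0 by (simp add: A_def)
    also have "\<xi> powr (\<delta> + 1) * \<xi> powr (-\<delta>) = \<xi> powr 1" by (rule powr_prod_exp) simp
    hence "a * \<xi> powr (-\<delta>) = \<xi> * exp (-\<xi>) / \<delta>" using xi0 by (simp add: a_def)
    finally show ?thesis .
  qed
  have ec: "exp (- \<gamma> * c) = exp (-\<xi>)" using ga0 by (simp add: c_def)
  have p12: "p1 c = p2 c"
    using AC ec dl by (simp add: p1_def p2_def A_def[symmetric] b_def field_simps)
  have q12: "q1 c = q2 c"
  proof -
    have "c powr (-\<delta>) * c powr (-1) = c powr (-\<delta> - 1)" by (rule powr_prod_exp) simp
    hence "c powr (-\<delta> - 1) = c powr (-\<delta>) / c" using c0 by (simp add: powr_minus divide_inverse)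
    hence "q1 c = - \<delta> * (A * c powr (-\<delta>)) / c" by (simp add: q1_def)
    also have "\<dots> = - \<gamma> * exp (-\<xi>)" unfolding AC using dl xi0 ga0 by (simp add: c_def field_simps)
    finally show ?thesis using ec by (simp add: q2_def)
  qed
  have d1: "DERIV p1 x :> q1 x" if "x > 0" for x
    using that ga0 unfolding p1_def q1_def A_def
    by (auto intro!: derivative_eq_intros simp: algebra_simps)
  have d2: "DERIV p2 x :> q2 x" for x
    unfolding p2_def q2_def by (auto intro!: derivative_eq_intros simp: algebra_simps)
  have d3: "DERIV q1 x :> r1 x" if "x > 0" for x
  proof -
    have e: "-\<delta> - 1 - 1 = -\<delta> - 2" by simp
    show ?thesis using that unfolding q1_def r1_def
      by (auto intro!: derivative_eq_intros simp: algebra_simps e)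
  qed
  have d4: "DERIV q2 x :> r2 x" for x
    unfolding q2_def r2_def by (auto intro!: derivative_eq_intros simp: algebra_simps power2_eq_square)
  have dphi: "DERIV \<phi> s :> \<phi>' s" if s: "s > 0" for s
  proof (cases "s < c")
    case True
    have "DERIV \<phi> s :> q1 s"
      by (rule has_field_derivative_transform_within_open[OF d1[OF s], of "{0<..<c}"])
         (use s True in \<open>auto simp: phi_eq\<close>)
    thus ?thesis using True by (simp add: \<phi>'_def)
  next
    case False
    show ?thesis
    proof (cases "s = c")
      case True
      have "DERIV (\<lambda>x. if x < c then p1 x else p2 x) c :> q2 c"
        by (rule DERIV_glue[where p=p1 and q=p2, OF _ d2[of c] p12]) (use d1[OF c0(1)] q12 in simp)
      thus ?thesis using True by (simp add: phi_eq \<phi>'_def)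
    next
      case False
      hence sc: "s > c" using \<open>\<not> s < c\<close> by simp
      have "DERIV \<phi> s :> q2 s"
        by (rule has_field_derivative_transform_within_open[OF d2, of "{c<..}"])
           (use sc in \<open>auto simp: phi_eq\<close>)
      thus ?thesis using sc by (simp add: \<phi>'_def)
    qed
  qed
  have dereq: "deriv \<phi> s = \<phi>' s" if "s > 0" for s
    using dphi[OF that] by (rule DERIV_imp_deriv)
  have p1pos: "p1 s > exp (-\<xi>)" "p1 s \<le> A * s powr (-\<delta>)" if "0 < s" "s < c" for s
  proof -
    have "c powr (-\<delta>) < s powr (-\<delta>)" using that dl by (intro powr_less_mono2_neg) auto
    hence "A * c powr (-\<delta>) < A * s powr (-\<delta>)" using A0 by simp
    hence "p1 c < p1 s" by (simp add: p1_def A_def[symmetric])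
    thus "p1 s > exp (-\<xi>)" using p12 ec by (simp add: p2_def)
    show "p1 s \<le> A * s powr (-\<delta>)" using b0 by (simp add: p1_def A_def[symmetric])
  qed
  have phipos: "\<forall>s>0. \<phi> s > 0"
  proof (intro allI impI)
    fix s :: real assume s: "s > 0"
    show "\<phi> s > 0"
    proof (cases "s < c")
      case True
      thus ?thesis using p1pos(1)[OF s True] by (simp add: phi_eq) (smt (verit) exp_gt_zero)
    qed (simp add: phi_eq p2_def)
  qed
  have W2: "W2inf_loc {0<..} \<phi>"
    unfolding W2inf_loc_def
  proof (intro conjI ballI allI impI)
    fix s :: real assume "s \<in> {0<..}"
    thus "\<phi> differentiable (at s)" using dphi[of s] unfolding real_differentiable_def by auto
  next
    fix K :: "real set" assume K: "compact K \<and> K \<subseteq> {0<..}"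
    show "\<exists>L. L-lipschitz_on K (deriv \<phi>)"
    proof (cases "K = {}")
      case True thus ?thesis by (auto intro: exI[of _ 0])
    next
      case False
      obtain m0 where m0: "m0 \<in> K" "\<forall>t\<in>K. m0 \<le> t" using compact_attains_inf[of K] K False by auto
      obtain M0 where M0: "M0 \<in> K" "\<forall>t\<in>K. t \<le> M0" using compact_attains_sup[of K] K False by auto
      define m where "m = min m0 c"
      define M where "M = max M0 c"
      have m: "m > 0" "m \<le> c" "c \<le> M" using m0 K c0 by (auto simp: m_def M_def)
      have KmM: "K \<subseteq> {m..M}" using m0 M0 unfolding m_def M_def by (force simp: min_le_iff_disj le_max_iff_disj)
      have L1: "(\<delta> * (\<delta> + 1) * A * m powr (-\<delta> - 2))-lipschitz_on {m..c} q1"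
      proof (rule lipschitz_from_deriv[OF d3])
        fix x assume x: "m \<le> x" "x \<le> c"
        show "x > 0" using x m by simp
        have "x powr (-\<delta> - 2) \<le> m powr (-\<delta> - 2)" using x m dl by (intro powr_mono2') auto
        thus "\<bar>r1 x\<bar> \<le> \<delta> * (\<delta> + 1) * A * m powr (-\<delta> - 2)"
          using dl A0 by (simp add: r1_def abs_mult)
      qed (use dl A0 in simp)
      have L2: "(\<gamma>\<^sup>2)-lipschitz_on {c..M} q2"
      proof (rule lipschitz_from_deriv[OF d4])
        fix x assume x: "c \<le> x" "x \<le> M"
        have e1: "exp (- \<gamma> * x) \<le> 1" using x c0 ga0 by simp
        have "\<bar>r2 x\<bar> = \<gamma>\<^sup>2 * exp (- \<gamma> * x)" by (simp add: r2_def abs_mult)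
        also have "\<dots> \<le> \<gamma>\<^sup>2 * 1" by (rule mult_left_mono[OF e1]) simp
        finally show "\<bar>r2 x\<bar> \<le> \<gamma>\<^sup>2" by simp
      qed simp
      have LL: "(max (\<delta> * (\<delta> + 1) * A * m powr (-\<delta> - 2)) (\<gamma>\<^sup>2))-lipschitz_on {m..M} (\<lambda>x. if x \<le> c then q1 x else q2 x)"
        by (rule lipschitz_on_concat_max[OF L1 L2 q12])
      have "(max (\<delta> * (\<delta> + 1) * A * m powr (-\<delta> - 2)) (\<gamma>\<^sup>2))-lipschitz_on K (\<lambda>x. if x \<le> c then q1 x else q2 x)"
        by (rule lipschitz_on_subset[OF LL KmM])
      moreover have "deriv \<phi> x = (if x \<le> c then q1 x else q2 x)" if "x \<in> K" for x
        using that K dereq[of x] q12 by (auto simp: \<phi>'_def)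
      ultimately have "(max (\<delta> * (\<delta> + 1) * A * m powr (-\<delta> - 2)) (\<gamma>\<^sup>2))-lipschitz_on K (deriv \<phi>)"
        by (rule lipschitz_on_transform)
      thus ?thesis by blast
    qed
  qed
  have key: "\<exists>\<phi>\<^sub>s\<^sub>s. (deriv \<phi> has_real_derivative \<phi>\<^sub>s\<^sub>s) (at s) \<and>
                real n ^ 2 * s powr ((2 * real n - 2) / real n) * \<phi>\<^sub>s\<^sub>s
                + 4 * (real n ^ 2 - real n) * s powr ((real n - 2) / real n) * deriv \<phi> s
                - real n * F s * deriv \<phi> s - real n * deriv F s * \<phi> s
                \<ge> k0 * \<gamma> powr (2 / real n) * \<phi> s" if s: "s > 0" "s \<noteq> c" for s
  proof (cases "s < c")
    case True
    have D: "(deriv \<phi> has_real_derivative r1 s) (at s)"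
      by (rule has_field_derivative_transform_within_open[OF d3[OF s(1)], of "{0<..<c}"])
         (use s True dereq in \<open>auto simp: \<phi>'_def\<close>)
    have "real n ^ 2 * s powr ((2 * real n - 2) / real n) * r1 s
                + 4 * (real n ^ 2 - real n) * s powr ((real n - 2) / real n) * deriv \<phi> s
                - real n * F s * deriv \<phi> s - real n * deriv F s * \<phi> s
                \<ge> k0 * \<gamma> powr (2 / real n) * \<phi> s"
    proof (rule ineq1[OF n al f0 dl cc c2 s(1) _ _ _ ga0 A0 b0 k0a])
      show "s < \<xi> / \<gamma>" using True by (simp add: c_def)
      show "\<xi> / \<gamma> \<le> 1" "0 < \<xi>" using c0 xi0 by (auto simp: c_def)
      show "\<phi> s = A * s powr (-\<delta>) - b" using True by (simp add: phi_eq p1_def A_def)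
      show "\<phi> s > 0" using phipos s by simp
      show "deriv \<phi> s = - \<delta> * A * s powr (-\<delta> - 1)" using dereq[OF s(1)] True by (simp add: \<phi>'_def q1_def)
      show "r1 s = \<delta> * (\<delta> + 1) * A * s powr (-\<delta> - 2)" by (simp add: r1_def)
      show "F s = f0 / (real n - \<alpha>) * s powr ((real n - \<alpha>) / real n)" using Fe[OF s(1)] True by (simp add: c_def)
      show "deriv F s = f0 / real n * s powr (-\<alpha> / real n)"
        using DERIV_imp_deriv[OF FD[OF s(1)]] Fse[OF s(1)] True by (simp add: c_def)
    qed
    thus ?thesis using D by blast
  next
    case False
    hence sc: "s > c" using s by simp
    have D: "(deriv \<phi> has_real_derivative r2 s) (at s)"
      by (rule has_field_derivative_transform_within_open[OF d4, of "{c<..}"])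
         (use sc c0 dereq in \<open>auto simp: \<phi>'_def\<close>)
    have FF: "deriv F s \<le> \<gamma> * F s"
    proof -
      have dF: "deriv F s = Fs s" using DERIV_imp_deriv[OF FD[OF s(1)]] .
      have "Fs s \<le> Fs c" using Fsm[of s] sc by (simp add: c_def)
      also have "Fs c = f0 / real n * c powr (-\<alpha> / real n)" using Fse[OF c0(1)] by (simp add: c_def)
      also have "\<dots> \<le> \<gamma> * F c"
      proof -
        have "c powr 1 * c powr (-\<alpha> / real n) = c powr ((real n - \<alpha>) / real n)"
          by (rule powr_prod_exp) (use n0 in \<open>simp add: field_simps\<close>)
        hence e: "c powr ((real n - \<alpha>) / real n) = c * c powr (-\<alpha> / real n)" using c0 by simp
        have Fc: "F c = f0 / (real n - \<alpha>) * c powr ((real n - \<alpha>) / real n)"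
          by (rule Fe[OF c0(1)]) (simp add: c_def)
        have gc: "\<gamma> * c = \<xi>" using ga0 by (simp add: c_def)
        have "\<gamma> * F c = f0 / (real n - \<alpha>) * (\<gamma> * c) * c powr (-\<alpha> / real n)"
          by (simp only: Fc e) (simp add: algebra_simps)
        hence "\<gamma> * F c = f0 * \<xi> / (real n - \<alpha>) * c powr (-\<alpha> / real n)"
          unfolding gc by simp
        moreover have "f0 / real n \<le> f0 * \<xi> / (real n - \<alpha>)"
        proof -
          have h1: "f0 / real n \<le> f0 / (real n - \<alpha>)" using al f0 n0 by (intro divide_left_mono) auto
          have h2: "f0 \<le> f0 * \<xi>" using f0 xi0 by simp
          have h3: "f0 / (real n - \<alpha>) \<le> f0 * \<xi> / (real n - \<alpha>)" using h2 al by (intro divide_right_mono) auto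
          show ?thesis using h1 h3 by linarith
        qed
        hence "f0 / real n * c powr (-\<alpha> / real n) \<le> f0 * \<xi> / (real n - \<alpha>) * c powr (-\<alpha> / real n)"
          by (rule mult_right_mono) simp
        ultimately show ?thesis by simp
      qed
      also have "\<dots> \<le> \<gamma> * F s" using Fm[of s] sc ga0 by (simp add: c_def)
      finally show ?thesis using dF by simp
    qed
    have "real n ^ 2 * s powr ((2 * real n - 2) / real n) * r2 s
                + 4 * (real n ^ 2 - real n) * s powr ((real n - 2) / real n) * deriv \<phi> s
                - real n * F s * deriv \<phi> s - real n * deriv F s * \<phi> s
                \<ge> k0 * \<gamma> powr (2 / real n) * \<phi> s"
    proof (rule ineq2[OF n xi(1) _ ga0 _ _ FF k0b])
      show "0 < \<xi>" using xi0 by simp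
      show "\<xi> / \<gamma> < s" using sc by (simp add: c_def)
      show "exp (- \<gamma> * s) > 0" by simp
      show "r2 s = \<gamma>\<^sup>2 * exp (- \<gamma> * s)" by (simp add: r2_def)
      show "deriv \<phi> s = - \<gamma> * exp (- \<gamma> * s)" using dereq[OF s(1)] sc by (simp add: \<phi>'_def q2_def)
      show "\<phi> s = exp (- \<gamma> * s)" using sc by (simp add: phi_eq p2_def)
    qed
    thus ?thesis using D by blast
  qed
  have AE: "AE s in lebesgue. s > 0 \<longrightarrow>
             (\<exists>\<phi>\<^sub>s\<^sub>s. (deriv \<phi> has_real_derivative \<phi>\<^sub>s\<^sub>s) (at s) \<and>
                real n ^ 2 * s powr ((2 * real n - 2) / real n) * \<phi>\<^sub>s\<^sub>s
                + 4 * (real n ^ 2 - real n) * s powr ((real n - 2) / real n) * deriv \<phi> s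
                - real n * F s * deriv \<phi> s - real n * deriv F s * \<phi> s
                \<ge> k0 * \<gamma> powr (2 / real n) * \<phi> s)"
  proof -
    have "AE s in lebesgue. s \<noteq> c" by (rule AE_completion[OF AE_lborel_singleton])
    thus ?thesis by (rule eventually_mono) (use key in blast)
  qed
  have INT: "(\<integral>\<^sup>+ s \<in> {0<..}. ennreal ((\<phi> s)\<^sup>2 / \<bar>deriv \<phi> s\<bar>) \<partial>lborel) \<le> ennreal (K0 / \<gamma>\<^sup>2)"
  proof -
    define h1 where "h1 = \<xi>\<^sup>2 * exp (-\<xi>) / (\<delta>\<^sup>2 * \<gamma>)"
    have pw: "ennreal ((\<phi> s)\<^sup>2 / \<bar>deriv \<phi> s\<bar>) * indicator {0<..} s
        \<le> ennreal h1 * indicator {0<..<c} s + ennreal (exp (- \<gamma> * s) / \<gamma>) * indicator {c..} s" for s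
    proof (cases "s > 0")
      case False thus ?thesis by (simp add: indicator_def)
    next
      case s0: True
      show ?thesis
      proof (cases "s < c")
        case sc: True
        define Z where "Z = s powr (-\<delta>)"
        have Z0: "Z > 0" using s0 by (simp add: Z_def)
        have ph: "\<phi> s = p1 s" using sc by (simp add: phi_eq)
        have php: "0 < p1 s" "p1 s \<le> A * Z"
          using p1pos[OF s0 sc] by (auto simp: Z_def) (smt (verit) exp_gt_zero)
        have dq: "\<bar>deriv \<phi> s\<bar> = \<delta> * A * Z / s"
        proof -
          have "s powr (-\<delta>) * s powr (-1) = s powr (-\<delta> - 1)" by (rule powr_prod_exp) simp
          hence "s powr (-\<delta> - 1) = Z / s" using s0 by (simp add: Z_def powr_minus divide_inverse)
          thus ?thesis using dereq[OF s0] sc dl A0 Z0 s0 by (simp add: \<phi>'_def q1_def abs_mult)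
        qed
        have dpos: "\<delta> * A * Z / s > 0" using dl A0 Z0 s0 by simp
        have "(\<phi> s)\<^sup>2 / \<bar>deriv \<phi> s\<bar> \<le> (A * Z)\<^sup>2 / (\<delta> * A * Z / s)"
          unfolding ph dq using php dpos by (intro divide_right_mono power_mono) auto
        also have "\<dots> = A * (Z * s) / \<delta>" using A0 Z0 s0 dl by (simp add: field_simps power2_eq_square)
        also have "Z * s = s powr (1 - \<delta>)"
        proof -
          have "s powr (-\<delta>) * s powr 1 = s powr (1 - \<delta>)" by (rule powr_prod_exp) simp
          thus ?thesis using s0 by (simp add: Z_def)
        qed
        also have "A * s powr (1 - \<delta>) / \<delta> \<le> A * c powr (1 - \<delta>) / \<delta>"
          using A0 dl s0 sc by (intro divide_right_mono mult_left_mono powr_mono2) auto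
        also have "A * c powr (1 - \<delta>) / \<delta> = h1"
        proof -
          have "c powr (-\<delta>) * c powr 1 = c powr (1 - \<delta>)" by (rule powr_prod_exp) simp
          hence "c powr (1 - \<delta>) = c powr (-\<delta>) * c" using c0 by simp
          hence "A * c powr (1 - \<delta>) / \<delta> = (A * c powr (-\<delta>)) * c / \<delta>" by simp
          also have "\<dots> = h1" unfolding AC unfolding h1_def c_def using dl ga0 by (simp add: field_simps power2_eq_square)
          finally show ?thesis .
        qed
        finally have "(\<phi> s)\<^sup>2 / \<bar>deriv \<phi> s\<bar> \<le> h1" .
        thus ?thesis using s0 sc by (simp add: indicator_def ennreal_leI)
      next
        case sc: False
        have ph: "\<phi> s = exp (- \<gamma> * s)" using sc by (simp add: phi_eq p2_def)
        have dq: "deriv \<phi> s = - \<gamma> * exp (- \<gamma> * s)" using dereq[OF s0] sc by (simp add: \<phi>'_def q2_def)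
        have "(\<phi> s)\<^sup>2 / \<bar>deriv \<phi> s\<bar> = exp (- \<gamma> * s) / \<gamma>"
          unfolding ph dq using ga0 by (simp add: abs_mult power2_eq_square)
        thus ?thesis using s0 sc by (simp add: indicator_def)
      qed
    qed
    have "(\<integral>\<^sup>+ s \<in> {0<..}. ennreal ((\<phi> s)\<^sup>2 / \<bar>deriv \<phi> s\<bar>) \<partial>lborel)
        \<le> (\<integral>\<^sup>+ s. (ennreal h1 * indicator {0<..<c} s + ennreal (exp (- \<gamma> * s) / \<gamma>) * indicator {c..} s) \<partial>lborel)"
      by (rule nn_integral_mono) (rule pw)
    also have "\<dots> = (\<integral>\<^sup>+ s. ennreal h1 * indicator {0<..<c} s \<partial>lborel)
        + (\<integral>\<^sup>+ s. ennreal (exp (- \<gamma> * s) / \<gamma>) * indicator {c..} s \<partial>lborel)"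
      by (rule nn_integral_add) auto
    also have "(\<integral>\<^sup>+ s. ennreal h1 * indicator {0<..<c} s \<partial>lborel) = ennreal h1 * ennreal c"
      using c0 by (simp add: nn_integral_cmult_indicator)
    also have "(\<integral>\<^sup>+ s. ennreal (exp (- \<gamma> * s) / \<gamma>) * indicator {c..} s \<partial>lborel) = ennreal (exp (-\<xi>) / \<gamma> * (1 / \<gamma>))"
    proof (rule nn_integral_has_integral_lebesgue')
      show "\<And>x. x \<in> {c..} \<Longrightarrow> 0 \<le> exp (- \<gamma> * x) / \<gamma>" using ga0 by simp
      have "((\<lambda>x. exp (- \<gamma> * x) * (1 / \<gamma>)) has_integral (exp (- \<gamma> * c) / \<gamma> * (1 / \<gamma>))) {c..}"
        by (rule has_integral_mult_left[OF has_integral_exp_minus_to_infinity[OF ga0]])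
      thus "((\<lambda>x. exp (- \<gamma> * x) / \<gamma>) has_integral (exp (-\<xi>) / \<gamma> * (1 / \<gamma>))) {c..}"
        unfolding ec by simp
    qed
    also have "ennreal h1 * ennreal c + ennreal (exp (-\<xi>) / \<gamma> * (1 / \<gamma>)) = ennreal (K0 / \<gamma>\<^sup>2)"
    proof -
      have "ennreal h1 * ennreal c + ennreal (exp (-\<xi>) / \<gamma> * (1 / \<gamma>)) = ennreal (h1 * c + exp (-\<xi>) / \<gamma> * (1 / \<gamma>))"
      proof -
        have h0: "h1 \<ge> 0" using dl ga0 by (simp add: h1_def)
        have "ennreal h1 * ennreal c = ennreal (h1 * c)" using h0 c0 by (simp add: ennreal_mult)
        moreover have "ennreal (h1 * c) + ennreal (exp (-\<xi>) / \<gamma> * (1 / \<gamma>)) = ennreal (h1 * c + exp (-\<xi>) / \<gamma> * (1 / \<gamma>))"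
          using h0 c0 ga0 by (intro ennreal_plus[symmetric]) auto
        ultimately show ?thesis by simp
      qed
      also have "h1 * c + exp (-\<xi>) / \<gamma> * (1 / \<gamma>) = K0 / \<gamma>\<^sup>2"
        unfolding h1_def c_def K0 using dl ga0 by (simp add: field_simps power2_eq_square power3_eq_cube)
      finally show ?thesis .
    qed
    finally show ?thesis .
  qed
  show ?thesis
    unfolding Let_def \<phi>_def[symmetric] using phipos W2 AE INT by blast
qed

theorem lemma3p2:
  fixes n :: nat and \<alpha> f\<^sub>0 \<xi> \<delta> :: real
  assumes n: "n \<ge> 3"
    and alpha: "2 < \<alpha>" "\<alpha> < real n"
    and f0: "f\<^sub>0 > 0" "f\<^sub>0 > 2 * real n / \<alpha> * (real n - 2) * (real n - \<alpha>)"
    and xi: "4 - 4 / real n < \<xi>" "\<xi> \<le> 4"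
    and delta: "0 < \<delta>" "\<delta> < 1"
      "\<delta> > max ((real n - \<alpha>) / real n)
         ((((real n - \<alpha>) * (3 * real n - 4) - f\<^sub>0)
           + sqrt ((((real n - \<alpha>) * (3 * real n - 4) - f\<^sub>0))\<^sup>2 + 4 * f\<^sub>0 * (real n - \<alpha>)\<^sup>2))
          / (2 * real n * (real n - \<alpha>)))"
  shows "\<exists>a b k\<^sub>0 K\<^sub>0 :: real. a > 0 \<and> b > 0 \<and> k\<^sub>0 > 0 \<and> K\<^sub>0 > 0 \<and>
    (\<forall>R \<rho> (f :: real \<Rightarrow> real) \<gamma>.
      0 < R \<and> R < 1 \<and> 0 < \<rho> \<and> \<rho> < R / 2 \<and>
      smooth_on {0<..} f \<and> antimono_on {0<..} f \<and> (\<forall>r>0. f r \<ge> 0) \<and>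
      (\<forall>r>0. r ^ n \<le> R - \<rho> \<longrightarrow> f r = f\<^sub>0 * r powr (-\<alpha>)) \<and>
      (\<forall>r>0. r ^ n \<ge> R + \<rho> \<longrightarrow> f r = 0) \<and>
      \<gamma> > 4 / (R - \<rho>) \<longrightarrow>
      (let F = Fpot n f;
           \<phi> = (\<lambda>s::real. if s < \<xi> / \<gamma> then a / \<gamma> powr \<delta> * s powr (-\<delta>) - b
                           else exp (- \<gamma> * s))
       in (\<forall>s>0. \<phi> s > 0) \<and>
          W2inf_loc {0<..} \<phi> \<and>
          (AE s in lebesgue. s > 0 \<longrightarrow>
             (\<exists>\<phi>\<^sub>s\<^sub>s. (deriv \<phi> has_real_derivative \<phi>\<^sub>s\<^sub>s) (at s) \<and>
                real n ^ 2 * s powr ((2 * real n - 2) / real n) * \<phi>\<^sub>s\<^sub>s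
                + 4 * (real n ^ 2 - real n) * s powr ((real n - 2) / real n) * deriv \<phi> s
                - real n * F s * deriv \<phi> s - real n * deriv F s * \<phi> s
                \<ge> k\<^sub>0 * \<gamma> powr (2 / real n) * \<phi> s)) \<and>
          (\<integral>\<^sup>+ s \<in> {0<..}. ennreal ((\<phi> s)\<^sup>2 / \<bar>deriv \<phi> s\<bar>) \<partial>lborel)
             \<le> ennreal (K\<^sub>0 / \<gamma>\<^sup>2)))"
proof -
  define N where "N = real n - \<alpha>"
  define h where "h = (real n - \<alpha>) * (3 * real n - 4) - f\<^sub>0"
  define C1 where "C1 = real n * \<delta> * (3 * real n - 4 - real n * \<delta>)"
  define C2 where "C2 = f\<^sub>0 * (real n * \<delta> / (real n - \<alpha>) - 1)"
  define a where "a = \<xi> powr (\<delta> + 1) * exp (-\<xi>) / \<delta>"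
  define b where "b = exp (-\<xi>) * (\<xi> / \<delta> - 1)"
  define k0 where "k0 = min ((C2 - C1) * \<xi> powr (-2 / real n)) (real n * \<xi> powr ((real n - 2) / real n) * (real n * \<xi> - 4 * (real n - 1)))"
  define K0 where "K0 = \<xi> ^ 3 * exp (-\<xi>) / \<delta>\<^sup>2 + exp (-\<xi>)"
  have n0: "real n > 0" using n by simp
  have n3: "real n \<ge> 3" using n by simp
  have N0: "N > 0" using alpha by (simp add: N_def)
  have xi0: "\<xi> > 1"
  proof -
    have "4 / real n \<le> 4 / 3" using n3 by (simp add: field_simps)
    thus ?thesis using xi by linarith
  qed
  have c2: "C2 > 0"
  proof -
    have "(real n - \<alpha>) / real n < \<delta>" using delta(3) by simp
    hence "real n - \<alpha> < \<delta> * real n" using n0 by (simp add: field_simps)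
    hence "real n * \<delta> / (real n - \<alpha>) > 1" using N0 by (simp add: N_def field_simps)
    thus ?thesis using f0 by (simp add: C2_def)
  qed
  have cc: "C2 - C1 > 0"
  proof -
    define D where "D = h\<^sup>2 + 4 * f\<^sub>0 * N\<^sup>2"
    have "(h + sqrt D) / (2 * real n * N) < \<delta>" using delta(3) by (simp add: D_def h_def N_def)
    hence lt: "sqrt D < 2 * real n * N * \<delta> - h" using n0 N0 by (simp add: field_simps)
    have "0 \<le> sqrt D" using f0 by (simp add: D_def)
    hence pos: "2 * real n * N * \<delta> - h > 0" using lt by linarith
    have "sqrt D < sqrt ((2 * real n * N * \<delta> - h)\<^sup>2)" using lt pos by simp
    hence "D < (2 * real n * N * \<delta> - h)\<^sup>2" by (simp only: real_sqrt_less_iff)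
    hence "0 < 4 * N * (real n ^ 2 * N * \<delta>\<^sup>2 - real n * \<delta> * h - f\<^sub>0 * N)"
      unfolding D_def by (simp add: algebra_simps power2_eq_square)
    hence q: "0 < real n ^ 2 * N * \<delta>\<^sup>2 - real n * \<delta> * h - f\<^sub>0 * N"
      using N0 by (simp add: zero_less_mult_iff)
    have "(C2 - C1) * N = real n ^ 2 * N * \<delta>\<^sup>2 - real n * \<delta> * h - f\<^sub>0 * N"
      unfolding C1_def C2_def h_def N_def using N0 unfolding N_def
      by (simp add: field_simps power2_eq_square)
    thus ?thesis using q N0 by (simp add: zero_less_mult_iff) (smt (verit) mult_nonpos_nonneg)
  qed
  have a0: "a > 0" using xi0 delta by (simp add: a_def)
  have b0: "b > 0" using xi0 delta by (simp add: b_def field_simps)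
  have k00: "k0 > 0"
  proof -
    have "real n * \<xi> - 4 * (real n - 1) > 0"
    proof -
      have "4 - 4 / real n < \<xi>" by (rule xi(1))
      thus ?thesis using n0 by (simp add: field_simps)
    qed
    thus ?thesis using cc n0 xi0 by (simp add: k0_def)
  qed
  have K00: "K0 > 0" unfolding K0_def using xi0 delta(1) by (intro add_pos_pos divide_pos_pos mult_pos_pos) auto
  show ?thesis
  proof (rule exI[of _ a], rule exI[of _ b], rule exI[of _ k0], rule exI[of _ K0], intro conjI a0 b0 k00 K00 allI impI)
    fix R \<rho> :: real and f :: "real \<Rightarrow> real" and \<gamma> :: real
    assume H: "0 < R \<and> R < 1 \<and> 0 < \<rho> \<and> \<rho> < R / 2 \<and>
      smooth_on {0<..} f \<and> antimono_on {0<..} f \<and> (\<forall>r>0. f r \<ge> 0) \<and>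
      (\<forall>r>0. r ^ n \<le> R - \<rho> \<longrightarrow> f r = f\<^sub>0 * r powr (-\<alpha>)) \<and>
      (\<forall>r>0. r ^ n \<ge> R + \<rho> \<longrightarrow> f r = 0) \<and>
      \<gamma> > 4 / (R - \<rho>)"
    define T where "T = R - \<rho>"
    have T: "T > 0" "T < 1" using H by (auto simp: T_def)
    have ga: "\<gamma> > 4 / T" using H by (simp add: T_def)
    have "4 / T > 4" using T by (simp add: field_simps)
    hence ga4: "\<gamma> > 4" using ga by linarith
    have cT: "\<xi> / \<gamma> < T"
    proof -
      have "4 < \<gamma> * T" using ga T by (simp add: field_simps)
      thus ?thesis using xi(2) ga4 by (simp add: field_simps)
    qed
    have cpos: "\<xi> / \<gamma> > 0" using xi0 ga4 by simp
    have cont: "\<And>x. 0 < x \<Longrightarrow> isCont f x"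
    proof -
      fix x :: real assume x: "0 < x"
      have "((deriv ^^ 0) f) differentiable (at x)" using H x unfolding smooth_on_def by blast
      hence "f differentiable (at x)" by simp
      thus "isCont f x" by (rule differentiable_imp_continuous_within)
    qed
    have nonneg: "\<And>r. r > 0 \<Longrightarrow> f r \<ge> 0" using H by blast
    have expl: "\<And>r. r > 0 \<Longrightarrow> r ^ n \<le> T \<Longrightarrow> f r = f\<^sub>0 * r powr (-\<alpha>)" using H by (simp add: T_def)
    have n1: "n \<ge> 1" using n by simp
    note FP = Fpot_props[OF n1 alpha(2) cont nonneg expl T(1)]
    have anti: "antimono_on {0<..} f" using H by blast
    have main: "let \<phi> = (\<lambda>s::real. if s < \<xi> / \<gamma> then a / \<gamma> powr \<delta> * s powr (-\<delta>) - b
                           else exp (- \<gamma> * s))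
       in (\<forall>s>0. \<phi> s > 0) \<and>
          W2inf_loc {0<..} \<phi> \<and>
          (AE s in lebesgue. s > 0 \<longrightarrow>
             (\<exists>\<phi>\<^sub>s\<^sub>s. (deriv \<phi> has_real_derivative \<phi>\<^sub>s\<^sub>s) (at s) \<and>
                real n ^ 2 * s powr ((2 * real n - 2) / real n) * \<phi>\<^sub>s\<^sub>s
                + 4 * (real n ^ 2 - real n) * s powr ((real n - 2) / real n) * deriv \<phi> s
                - real n * Fpot n f s * deriv \<phi> s - real n * deriv (Fpot n f) s * \<phi> s
                \<ge> k0 * \<gamma> powr (2 / real n) * \<phi> s)) \<and>
          (\<integral>\<^sup>+ s \<in> {0<..}. ennreal ((\<phi> s)\<^sup>2 / \<bar>deriv \<phi> s\<bar>) \<partial>lborel)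
             \<le> ennreal (K0 / \<gamma>\<^sup>2)"
    proof (rule phi_main[where Fs = "\<lambda>s. f (root n s) / real n"])
      show "n \<ge> 3" "2 < \<alpha>" "\<alpha> < real n" "f\<^sub>0 > 0" "4 - 4 / real n < \<xi>" "\<xi> \<le> 4" "0 < \<delta>" "\<delta> < 1" "\<gamma> > 4"
        using n alpha f0 xi delta ga4 by auto
      show "f\<^sub>0 * (real n * \<delta> / (real n - \<alpha>) - 1) - real n * \<delta> * (3 * real n - 4 - real n * \<delta>) > 0"
        using cc by (simp add: C1_def C2_def)
      show "f\<^sub>0 * (real n * \<delta> / (real n - \<alpha>) - 1) > 0" using c2 by (simp add: C2_def)
      show "a = \<xi> powr (\<delta> + 1) * exp (-\<xi>) / \<delta>" "b = exp (-\<xi>) * (\<xi> / \<delta> - 1)"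
        "K0 = \<xi> ^ 3 * exp (-\<xi>) / \<delta>\<^sup>2 + exp (-\<xi>)" by (simp_all add: a_def b_def K0_def)
      show "k0 \<le> (f\<^sub>0 * (real n * \<delta> / (real n - \<alpha>) - 1) - real n * \<delta> * (3 * real n - 4 - real n * \<delta>)) * \<xi> powr (-2 / real n)"
        "k0 \<le> real n * \<xi> powr ((real n - 2) / real n) * (real n * \<xi> - 4 * (real n - 1))"
        by (simp_all add: k0_def C1_def C2_def)
      show "\<And>s. 0 < s \<Longrightarrow> DERIV (Fpot n f) s :> f (root n s) / real n" by (rule FP(1))
      show "\<And>s. 0 < s \<Longrightarrow> s \<le> \<xi> / \<gamma> \<Longrightarrow> Fpot n f s = f\<^sub>0 / (real n - \<alpha>) * s powr ((real n - \<alpha>) / real n)"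
        using FP(2) cT by simp
      show "\<And>s. 0 < s \<Longrightarrow> s \<le> \<xi> / \<gamma> \<Longrightarrow> f (root n s) / real n = f\<^sub>0 / real n * s powr (-\<alpha> / real n)"
        using FP(4) cT by simp
      show "\<And>s. \<xi> / \<gamma> \<le> s \<Longrightarrow> Fpot n f (\<xi> / \<gamma>) \<le> Fpot n f s"
        using FP(3) cpos by simp
      show "\<And>s. \<xi> / \<gamma> \<le> s \<Longrightarrow> f (root n s) / real n \<le> f (root n (\<xi> / \<gamma>)) / real n"
      proof -
        fix s assume s: "\<xi> / \<gamma> \<le> s"
        have r: "root n (\<xi> / \<gamma>) \<le> root n s" using s n0 by simp
        have "0 < root n (\<xi> / \<gamma>)" using cpos n0 by simp
        hence "f (root n s) \<le> f (root n (\<xi> / \<gamma>))"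
          using monotone_onD[OF anti _ _ r] r by auto
        thus "f (root n s) / real n \<le> f (root n (\<xi> / \<gamma>)) / real n" using n0 by (simp add: divide_right_mono)
      qed
    qed
    thus "let F = Fpot n f;
           \<phi> = (\<lambda>s::real. if s < \<xi> / \<gamma> then a / \<gamma> powr \<delta> * s powr (-\<delta>) - b
                           else exp (- \<gamma> * s))
       in (\<forall>s>0. \<phi> s > 0) \<and>
          W2inf_loc {0<..} \<phi> \<and>
          (AE s in lebesgue. s > 0 \<longrightarrow>
             (\<exists>\<phi>\<^sub>s\<^sub>s. (deriv \<phi> has_real_derivative \<phi>\<^sub>s\<^sub>s) (at s) \<and>
                real n ^ 2 * s powr ((2 * real n - 2) / real n) * \<phi>\<^sub>s\<^sub>s
                + 4 * (real n ^ 2 - real n) * s powr ((real n - 2) / real n) * deriv \<phi> s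
                - real n * F s * deriv \<phi> s - real n * deriv F s * \<phi> s
                \<ge> k0 * \<gamma> powr (2 / real n) * \<phi> s)) \<and>
          (\<integral>\<^sup>+ s \<in> {0<..}. ennreal ((\<phi> s)\<^sup>2 / \<bar>deriv \<phi> s\<bar>) \<partial>lborel)
             \<le> ennreal (K0 / \<gamma>\<^sup>2)"
      unfolding Let_def .
  qed
qed

end
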